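(* Let $n\ge 1$ be an integer and $0<p_{\mathrm{tot}}\le 1$. Let $\mathcal X$ be the family of random variables $$\mathcal X=\Big\{\max\big(\{X_i\}_{i=1}^n\big)\ \Big|\ X_i\sim\mathrm{geom}(p_i)\text{ independent},\ 0<p_i\le 1,\ \prod_{i=1}^n p_i=p_{\mathrm{tot}}\Big\}.$$ Let $X_{\mathrm{hom}}\in\mathcal X$ be the member with $p_1=\dots=p_n$, i.e. $X_{\mathrm{hom}}=\max(\{X_{\mathrm{hom},i}\}_{i=1}^n)$ with the $X_{\mathrm{hom},i}$ independent and $X_{\mathrm{hom},i}\sim\mathrm{geom}(\sqrt[n]{p_{\mathrm{tot}}})$. Then for every $X\in\mathcal X$ we have $X\ge_{\mathrm{st}}X_{\mathrm{hom}}$.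
   Context: $\mathrm{geom}(p)$ denotes the geometric distribution on $\{1,2,3,\dots\}$ with success probability $p$: $\Pr(X=k)=(1-p)^{k-1}p$, so $\Pr(X\le k)=1-(1-p)^k$. For random variables $X,Y$, $X\ge_{\mathrm{st}}Y$ ($X$ stochastically dominates $Y$) means $\Pr(X>z)\ge\Pr(Y>z)$ for all real $z$. *)

theory Defs
  imports "HOL-Probability.Probability"
begin

text \<open>geom(p) on {1,2,3,...}: number of trials up to and including the first success.
  The library's geometric_pmf counts failures (support {0,1,...}), so we shift by one.\<close>
definition geom :: "real \<Rightarrow> nat pmf" where
  "geom p = map_pmf Suc (geometric_pmf p)"

definition max_geom :: "nat \<Rightarrow> (nat \<Rightarrow> real) \<Rightarrow> nat pmf" where
  "max_geom n ps = map_pmf (\<lambda>f. Max (f ` {..<n})) (Pi_pmf {..<n} 0 (\<lambda>i. geom (ps i)))"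

definition stoch_dom :: "nat pmf \<Rightarrow> nat pmf \<Rightarrow> bool" where
  "stoch_dom X Y \<longleftrightarrow> (\<forall>z::real. measure_pmf.prob X {x. real x > z} \<ge> measure_pmf.prob Y {x. real x > z})"

end

theory Submission
  imports Defs
begin

lemma geom_cdf:
  assumes "0 < p" "p \<le> 1"
  shows "measure_pmf.prob (geom p) {x. x \<le> k} = 1 - (1 - p) ^ k"
proof (induction k)
  case 0
  have "{x::nat. x \<le> 0} = {0}" by auto
  moreover have "pmf (geom p) 0 = 0"
    unfolding geom_def by (simp add: pmf_eq_0_set_pmf)
  ultimately show ?case by (simp add: measure_pmf_single)
next
  case (Suc k)
  have e: "{x. x \<le> Suc k} = {x. x \<le> k} \<union> {Suc k}" by auto
  have "pmf (geom p) (Suc k) = (1 - p) ^ k * p"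
    unfolding geom_def using assms by (simp add: pmf_map_inj')
  then have "measure_pmf.prob (geom p) {x. x \<le> Suc k} = (1 - (1 - p) ^ k) + (1 - p) ^ k * p"
    unfolding e by (subst measure_pmf.finite_measure_Union) (auto simp: Suc measure_pmf_single)
  then show ?case by (simp add: algebra_simps)
qed

lemma max_cdf:
  assumes "n \<ge> 1" "\<forall>i<n. 0 < ps i \<and> ps i \<le> 1"
  shows "measure_pmf.prob (max_geom n ps) {x. x \<le> k} = (\<Prod>i<n. 1 - (1 - ps i) ^ k)"
proof -
  let ?P = "Pi_pmf {..<n} 0 (\<lambda>i. geom (ps i))"
  have "measure_pmf.prob (max_geom n ps) {x. x \<le> k}
      = measure_pmf.prob ?P ((\<lambda>f. Max (f ` {..<n})) -` {x. x \<le> k})"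
    unfolding max_geom_def by simp
  also have "\<dots> = measure_pmf.prob ?P ((\<lambda>f. Max (f ` {..<n})) -` {x. x \<le> k} \<inter> set_pmf ?P)"
    by (simp add: measure_Int_set_pmf)
  also have "(\<lambda>f. Max (f ` {..<n})) -` {x. x \<le> k} \<inter> set_pmf ?P
      = PiE_dflt {..<n} 0 (\<lambda>_. {x. x \<le> k}) \<inter> set_pmf ?P"
  proof -
    have "0 \<in> {..<n}" using assms by auto
    then have ne: "{..<n} \<noteq> {}" by blast
    show ?thesis using set_Pi_pmf_subset[of "{..<n}" 0 "\<lambda>i. geom (ps i)"]
      by (auto simp: PiE_dflt_def Max_le_iff ne)
  qed
  also have "measure_pmf.prob ?P \<dots> = measure_pmf.prob ?P (PiE_dflt {..<n} 0 (\<lambda>_. {x. x \<le> k}))"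
    by (simp add: measure_Int_set_pmf)
  also have "\<dots> = (\<Prod>i<n. measure_pmf.prob (geom (ps i)) {x. x \<le> k})"
    by (simp add: measure_Pi_pmf_PiE_dflt)
  also have "\<dots> = (\<Prod>i<n. 1 - (1 - ps i) ^ k)"
    using assms by (intro prod.cong) (auto simp: geom_cdf)
  finally show ?thesis .
qed

lemma h_mono:
  fixes a b :: real
  assumes "0 \<le> a" "a \<le> b" "k \<ge> 1"
  shows "a ^ (k - 1) / (\<Sum>j<k. a ^ j) \<le> b ^ (k - 1) / (\<Sum>j<k. b ^ j)"
proof -
  have pos: "(\<Sum>j<k. c ^ j) > 0" if "c \<ge> 0" for c :: real
  proof -
    have "(\<Sum>j<k. c ^ j) \<ge> (\<Sum>j\<in>{0}. c ^ j)"
      using assms that by (intro sum_mono2) auto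
    then show ?thesis by simp
  qed
  have "a ^ (k - 1) * (\<Sum>j<k. b ^ j) \<le> b ^ (k - 1) * (\<Sum>j<k. a ^ j)"
    unfolding sum_distrib_left
  proof (rule sum_mono)
    fix j assume "j \<in> {..<k}"
    then have j: "k - 1 = j + (k - 1 - j)" by auto
    have "a ^ (k - 1 - j) \<le> b ^ (k - 1 - j)" using assms by (intro power_mono) auto
    then have "(a ^ j * b ^ j) * a ^ (k - 1 - j) \<le> (a ^ j * b ^ j) * b ^ (k - 1 - j)"
      using assms by (intro mult_left_mono) auto
    then show "a ^ (k - 1) * b ^ j \<le> b ^ (k - 1) * a ^ j"
      by (subst (1 2) j) (simp add: power_add algebra_simps)
  qed
  then show ?thesis using pos[of a] pos[of b] assms
    by (simp add: divide_simps)
qed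

lemma key_ineq:
  fixes ps :: "nat \<Rightarrow> real"
  assumes "n \<ge> 1" "\<forall>i<n. 0 < ps i \<and> ps i \<le> 1" "k \<ge> 1"
  shows "(\<Prod>i<n. 1 - (1 - ps i) ^ k) \<le> (1 - (1 - root n (\<Prod>i<n. ps i)) ^ k) ^ n"
proof -
  define \<phi> where "\<phi> x = 1 - (1 - exp x) ^ k" for x :: real
  define D where "D x = real k * (1 - exp x) ^ (k - 1) * exp x / \<phi> x" for x :: real
  have \<phi>pos: "\<phi> x > 0" if "x \<le> 0" for x
  proof -
    have "0 \<le> 1 - exp x" "1 - exp x < 1" using that by auto
    then have "(1 - exp x) ^ k < 1" using assms(3) by (simp add: power_less_one_iff)
    then show ?thesis by (simp add: \<phi>_def)
  qed
  have deriv: "((\<lambda>x. - ln (\<phi> x)) has_real_derivative - D x) (at x)" if "x \<in> {..0}" for x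
  proof -
    have "((\<lambda>x. - ln (1 - (1 - exp x) ^ k)) has_real_derivative
       - ((1 / \<phi> x) * - (real k * (1 - exp x) ^ (k - 1) * - exp x))) (at x)"
      using \<phi>pos[of x] that unfolding \<phi>_def
      by (auto intro!: derivative_eq_intros)
    then show ?thesis unfolding \<phi>_def[symmetric] D_def by (simp add: field_simps)
  qed
  have Dmono: "D y \<le> D x" if "x \<le> y" "y \<le> 0" for x y
  proof -
    define a where "a = 1 - exp y"
    define b where "b = 1 - exp x"
    have ab: "0 \<le> a" "a \<le> b" "b < 1" using that by (auto simp: a_def b_def)
    have Spos: "(\<Sum>j<k. c ^ j) > 0" if "c \<ge> 0" for c :: real
    proof -
      have "(\<Sum>j<k. c ^ j) \<ge> (\<Sum>j\<in>{0}. c ^ j)"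
        using assms that by (intro sum_mono2) auto
      then show ?thesis by simp
    qed
    have Sa: "(\<Sum>j<k. a ^ j) > 0" "(\<Sum>j<k. b ^ j) > 0" using Spos ab by auto
    have "D y = real k * (a ^ (k - 1) / (\<Sum>j<k. a ^ j))"
    proof -
      have "\<phi> y = exp y * (\<Sum>j<k. a ^ j)" unfolding \<phi>_def a_def
        by (subst one_diff_power_eq) simp
      then show ?thesis unfolding D_def a_def using Sa by (simp add: a_def field_simps)
    qed
    moreover have "D x = real k * (b ^ (k - 1) / (\<Sum>j<k. b ^ j))"
    proof -
      have "\<phi> x = exp x * (\<Sum>j<k. b ^ j)" unfolding \<phi>_def b_def
        by (subst one_diff_power_eq) simp
      then show ?thesis unfolding D_def b_def using Sa by (simp add: b_def field_simps)
    qed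
    moreover have "real k * (a ^ (k - 1) / (\<Sum>j<k. a ^ j)) \<le> real k * (b ^ (k - 1) / (\<Sum>j<k. b ^ j))"
      by (rule mult_left_mono[OF h_mono[OF ab(1,2) assms(3)]]) simp
    ultimately show ?thesis by simp
  qed
  have conv: "convex_on {..0} (\<lambda>x. - ln (\<phi> x))"
    by (rule convex_on_realI[where f' = "\<lambda>x. - D x"]) (auto intro: deriv Dmono)
  have J: "- ln (\<phi> (\<Sum>i<n. (1 / real n) *\<^sub>R ln (ps i))) \<le> (\<Sum>i<n. (1 / real n) * - ln (\<phi> (ln (ps i))))"
    apply (rule convex_on_sum[OF _ _ conv])
    using assms by (auto simp: ln_le_zero_iff lessThan_empty_iff)
  define P where "P = (\<Prod>i<n. ps i)"
  have Ppos: "P > 0" unfolding P_def using assms by (intro prod_pos) auto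
  have npos: "real n > 0" using assms by simp
  have m: "(\<Sum>i<n. (1 / real n) *\<^sub>R ln (ps i)) = ln P / real n"
    unfolding P_def using assms by (subst ln_prod) (auto simp: sum_divide_distrib[symmetric])
  have r: "exp (ln P / real n) = root n P"
    using Ppos assms by (simp add: root_powr_inverse powr_def)
  have \<phi>i: "\<phi> (ln (ps i)) = 1 - (1 - ps i) ^ k" if "i < n" for i
    using assms that by (simp add: \<phi>_def)
  have \<phi>ipos: "1 - (1 - ps i) ^ k > 0" if "i < n" for i
    using \<phi>pos[of "ln (ps i)"] \<phi>i[OF that] assms that by (simp add: ln_le_zero_iff)
  have \<phi>m: "\<phi> (ln P / real n) = 1 - (1 - root n P) ^ k"
    unfolding \<phi>_def r ..
  have mle: "ln P / real n \<le> 0"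
  proof -
    have "P \<le> 1" unfolding P_def using assms by (intro prod_le_1) auto
    then show ?thesis using Ppos npos by (simp add: divide_nonpos_pos)
  qed
  have \<phi>mpos: "1 - (1 - root n P) ^ k > 0" using \<phi>pos[OF mle] \<phi>m by simp
  have "- ln (1 - (1 - root n P) ^ k) \<le> (1 / real n) * (\<Sum>i<n. - ln (1 - (1 - ps i) ^ k))"
    using J unfolding m \<phi>m sum_distrib_left by (simp add: \<phi>i)
  then have "(\<Sum>i<n. ln (1 - (1 - ps i) ^ k)) \<le> real n * ln (1 - (1 - root n P) ^ k)"
    using npos by (simp add: sum_negf field_simps)
  then have "ln (\<Prod>i<n. 1 - (1 - ps i) ^ k) \<le> ln ((1 - (1 - root n P) ^ k) ^ n)"
    using \<phi>ipos \<phi>mpos by (subst ln_prod) (auto simp: ln_realpow dest: less_imp_neq)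
  then show ?thesis
    using \<phi>ipos \<phi>mpos unfolding P_def[symmetric]
    by (subst (asm) ln_le_cancel_iff) (auto intro: prod_pos)
qed

theorem mainTheorem1:
  fixes n :: nat and p_tot :: real and ps :: "nat \<Rightarrow> real"
  assumes "n \<ge> 1"
    and "0 < p_tot" and "p_tot \<le> 1"
    and "\<forall>i<n. 0 < ps i \<and> ps i \<le> 1"
    and "(\<Prod>i<n. ps i) = p_tot"
  shows "stoch_dom (max_geom n ps) (max_geom n (\<lambda>_. root n p_tot))"
  unfolding stoch_dom_def
proof
  fix z :: real
  have rt: "0 < root n p_tot \<and> root n p_tot \<le> 1"
    using assms by (simp add: real_root_le_iff[where y=1, simplified])
  show "measure_pmf.prob (max_geom n (\<lambda>_. root n p_tot)) {x. z < real x}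
      \<le> measure_pmf.prob (max_geom n ps) {x. z < real x}"
  proof (cases "z < 0")
    case True
    then have "{x. z < real x} = UNIV" by (auto intro: less_le_trans)
    then show ?thesis by simp
  next
    case False
    define k where "k = nat \<lfloor>z\<rfloor>"
    have e: "{x. z < real x} = - {x. x \<le> k}"
      using False unfolding k_def by (auto simp: le_nat_iff floor_less_iff le_floor_iff)
    have c: "measure_pmf.prob M {x. z < real x} = 1 - measure_pmf.prob M {x. x \<le> k}" for M :: "nat pmf"
      unfolding e Compl_eq_Diff_UNIV using measure_pmf.prob_compl[of "{x. x \<le> k}" M] by simp
    have hom: "measure_pmf.prob (max_geom n (\<lambda>_. root n p_tot)) {x. x \<le> k}
        = (1 - (1 - root n p_tot) ^ k) ^ n"
      using max_cdf[OF assms(1), of "\<lambda>_. root n p_tot" k] rt by simp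
    have het: "measure_pmf.prob (max_geom n ps) {x. x \<le> k} = (\<Prod>i<n. 1 - (1 - ps i) ^ k)"
      using max_cdf[OF assms(1,4)] .
    have "(\<Prod>i<n. 1 - (1 - ps i) ^ k) \<le> (1 - (1 - root n p_tot) ^ k) ^ n"
    proof (cases "k = 0")
      case True
      then show ?thesis using assms(1) by simp
    next
      case False
      then show ?thesis using key_ineq[OF assms(1,4)] assms(5) by simp
    qed
    then show ?thesis unfolding c hom het by simp
  qed
qed

end
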